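(* With $W=C^0_+\oplus E_0\oplus C^0_-$ and $\mathcal{T}=E+iC^0$, one has (1) $W=\{x\in E:\ e^{zh}x\in\mathcal{T}\text{ for all }z\in\mathcal{S}_\pi\}$; (2) $\overline W=\{x\in E:\ e^{zh}x\in E+iC\text{ for all }z\in\mathcal{S}_\pi\}$, where $e^{zh}$ denotes the complex linear extension to $E_\mathbb{C}$ and $\mathcal{S}_\pi=\{z\in\mathbb{C}:0<\operatorname{Im}z<\pi\}$.
   Context: $E$ finite-dimensional real vector space; $h\in\mathrm{End}(E)$ diagonalizable with eigenvalues in $\{-1,0,1\}$, $E_j=\ker(h-j)$; $\tau=e^{\pi ih}$; $C$ pointed generating closed convex cone invariant under $e^{\mathbb{R}h}$ and under $-\tau$, interior $C^0$; $C_\pm=\pm C\cap E_{\pm1}$ with interiors $C_\pm^0$ relative to $E_{\pm1}$. *)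

theory Defs
  imports "HOL-Analysis.Analysis"
begin

text \<open>The complexification E_C of E is modelled as pairs (u,v) standing for u + i v.\<close>

definition eigsp :: "('a::real_vector \<Rightarrow> 'a) \<Rightarrow> real \<Rightarrow> 'a set" where
  "eigsp h j = {x. h x = j *\<^sub>R x}"

definition rexp_op :: "real \<Rightarrow> ('a::real_normed_vector \<Rightarrow> 'a) \<Rightarrow> 'a \<Rightarrow> 'a" where
  "rexp_op t h x = (\<Sum>n. (t ^ n / fact n) *\<^sub>R (h ^^ n) x)"

definition cexp_op :: "complex \<Rightarrow> ('a::real_normed_vector \<Rightarrow> 'a) \<Rightarrow> 'a \<times> 'a \<Rightarrow> 'a \<times> 'a" where
  "cexp_op z h p =
     ((\<Sum>n. Re (z ^ n / fact n) *\<^sub>R (h ^^ n) (fst p) - Im (z ^ n / fact n) *\<^sub>R (h ^^ n) (snd p)),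
      (\<Sum>n. Im (z ^ n / fact n) *\<^sub>R (h ^^ n) (fst p) + Re (z ^ n / fact n) *\<^sub>R (h ^^ n) (snd p)))"

definition strip_pi :: "complex set" where
  "strip_pi = {z. 0 < Im z \<and> Im z < pi}"

end

theory Submission
  imports Defs
begin

lemma exp_sums_c: "(\<lambda>n. z^n / fact n) sums exp (z::complex)"
  using exp_converges[of z] by (simp add: divide_inverse scaleR_conv_of_real mult.commute)

lemma funpow_decomp:
  assumes "linear h" "u \<in> eigsp h (-1)" "v \<in> eigsp h 0" "w \<in> eigsp h 1"
  shows "(h ^^ n) (u + v + w) = ((-1)^n) *\<^sub>R u + (0^n) *\<^sub>R v + w"
proof (induction n)
  case 0 then show ?case by simp
next
  case (Suc n)
  have hu: "h u = - u" and hv: "h v = 0" and hw: "h w = w" using assms by (auto simp: eigsp_def)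
  show ?case using Suc by (simp add: linear_add[OF assms(1)] linear_scale[OF assms(1)] hu hv hw)
qed

lemma funpow_zero: fixes h :: "'a::real_vector \<Rightarrow> 'a" assumes "linear h" shows "(h ^^ n) 0 = 0"
  using assms by (induction n) (auto simp: linear_0)

lemma bl_neg_pow:
  assumes "bounded_linear (f :: complex \<Rightarrow> real)"
  shows "f ((-z)^n / fact n) = (-1)^n * f (z^n / fact n)"
proof -
  have p: "(-z)^n = (-1)^n * z^n" by (rule power_minus)
  have q: "complex_of_real ((-1)^n) = (-1)^n" by simp
  have e1: "(-z)^n / fact n = complex_of_real ((-1)^n) * (z^n / fact n)"
    unfolding p q by simp
  have e2: "complex_of_real ((-1)^n) * (z^n / fact n) = ((-1)^n::real) *\<^sub>R (z^n / fact n)"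
    by (simp only: scaleR_conv_of_real)
  have "f (((-1)^n::real) *\<^sub>R (z^n / fact n)) = ((-1)^n::real) *\<^sub>R f (z^n / fact n)"
    by (rule linear_scale[OF bounded_linear.linear[OF assms]])
  then show ?thesis unfolding e1 e2 by simp
qed

lemma series_f:
  fixes u v w :: "'b::real_normed_vector"
  assumes "bounded_linear (f :: complex \<Rightarrow> real)"
  shows "(\<lambda>n. f (z^n / fact n) *\<^sub>R (((-1)^n) *\<^sub>R u + (0^n) *\<^sub>R v + w)) sums
     (f (exp (-z)) *\<^sub>R u + f 1 *\<^sub>R v + f (exp z) *\<^sub>R w)"
proof -
  have s1: "(\<lambda>n. f ((-z)^n / fact n) *\<^sub>R u) sums (f (exp (-z)) *\<^sub>R u)"
    by (rule sums_scaleR_left[OF bounded_linear.sums[OF assms exp_sums_c[of "-z"]]])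
  have s3: "(\<lambda>n. f (z^n / fact n) *\<^sub>R w) sums (f (exp z) *\<^sub>R w)"
    by (rule sums_scaleR_left[OF bounded_linear.sums[OF assms exp_sums_c[of "z"]]])
  have s2: "(\<lambda>n. if n = 0 then f 1 *\<^sub>R v else 0) sums (f 1 *\<^sub>R v)"
    using sums_single[of 0 "\<lambda>n. f 1 *\<^sub>R v"] by simp
  have "(\<lambda>n. f ((-z)^n / fact n) *\<^sub>R u + (if n = 0 then f 1 *\<^sub>R v else 0) + f (z^n / fact n) *\<^sub>R w)
      sums (f (exp (-z)) *\<^sub>R u + f 1 *\<^sub>R v + f (exp z) *\<^sub>R w)"
    by (intro sums_add s1 s2 s3)
  moreover have "\<And>n. f ((-z)^n / fact n) *\<^sub>R u + (if n = 0 then f 1 *\<^sub>R v else 0) + f (z^n / fact n) *\<^sub>R w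
      = f (z^n / fact n) *\<^sub>R (((-1)^n) *\<^sub>R u + (0^n) *\<^sub>R v + w)"
    by (case_tac "n = 0") (simp_all add: bl_neg_pow[OF assms] scaleR_add_right mult.commute)
  ultimately show ?thesis by simp
qed

lemma cexp_decomp:
  assumes "linear h" "u \<in> eigsp h (-1)" "v \<in> eigsp h 0" "w \<in> eigsp h 1"
  shows "cexp_op z h (u + v + w, 0) =
    (Re (exp (-z)) *\<^sub>R u + v + Re (exp z) *\<^sub>R w, Im (exp (-z)) *\<^sub>R u + Im (exp z) *\<^sub>R w)"
proof -
  have a: "(\<lambda>n. Re (z^n / fact n) *\<^sub>R (((-1)^n) *\<^sub>R u + (0^n) *\<^sub>R v + w)) sums
     (Re (exp (-z)) *\<^sub>R u + v + Re (exp z) *\<^sub>R w)"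
    using series_f[OF bounded_linear_Re, of z u v w] by simp
  have b: "(\<lambda>n. Im (z^n / fact n) *\<^sub>R (((-1)^n) *\<^sub>R u + (0^n) *\<^sub>R v + w)) sums
     (Im (exp (-z)) *\<^sub>R u + Im (exp z) *\<^sub>R w)"
    using series_f[OF bounded_linear_Im, of z u v w] by simp
  show ?thesis unfolding cexp_op_def
    using sums_unique[OF a] sums_unique[OF b]
    by (simp add: funpow_zero[OF assms(1)] funpow_decomp[OF assms])
qed

lemma rexp_decomp:
  assumes "linear h" "u \<in> eigsp h (-1)" "v \<in> eigsp h 0" "w \<in> eigsp h 1"
  shows "rexp_op t h (u + v + w) = exp (-t) *\<^sub>R u + v + exp t *\<^sub>R w"
proof -
  have a: "(\<lambda>n. Re (complex_of_real t^n / fact n) *\<^sub>R (((-1)^n) *\<^sub>R u + (0^n) *\<^sub>R v + w)) sums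
     (Re (exp (- complex_of_real t)) *\<^sub>R u + v + Re (exp (complex_of_real t)) *\<^sub>R w)"
    using series_f[OF bounded_linear_Re, of "complex_of_real t" u v w] by simp
  have e: "\<And>n. Re (complex_of_real t^n / fact n) = t^n / fact n"
    by (metis Re_complex_of_real of_real_divide of_real_fact of_real_power)
  have e2: "exp (- complex_of_real t) = complex_of_real (exp (-t))"
    by (metis exp_of_real of_real_minus)
  show ?thesis unfolding rexp_op_def
    using sums_unique[OF a] by (simp add: e e2 funpow_decomp[OF assms] exp_of_real)
qed


lemma aff_gen:
  fixes S E :: "'b::euclidean_space set"
  assumes "subspace E" "S \<subseteq> E" "0 \<in> S" "\<forall>y\<in>E. \<exists>a\<in>S. \<exists>b\<in>S. y = a - b"
  shows "affine hull S = E"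
proof -
  have "affine hull S = span S" by (rule affine_hull_span_0[OF hull_inc[OF assms(3)]])
  moreover have "span S = E"
  proof (rule span_subspace[OF assms(2) _ assms(1)])
    show "E \<subseteq> span S"
    proof
      fix y assume "y \<in> E"
      then obtain a b where "a \<in> S" "b \<in> S" "y = a - b" using assms(4) by blast
      then show "y \<in> span S" by (simp add: span_diff span_base)
    qed
  qed
  ultimately show ?thesis by simp
qed

lemma io_rel: "affine hull S = E \<Longrightarrow> top_of_set E interior_of S = rel_interior S"
  by (simp add: rel_interior_def interior_of_def)

lemma relint_scale:
  fixes S :: "'b::euclidean_space set"
  assumes "cone S" "r > 0" "y \<in> rel_interior S"
  shows "r *\<^sub>R y \<in> rel_interior S"
proof -
  have S: "S \<noteq> {}" using assms(3) rel_interior_subset by blast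
  have "(*\<^sub>R) r ` S = S" using cone_iff[OF S] assms(1,2) by blast
  moreover have "rel_interior ((*\<^sub>R) r ` S) = (*\<^sub>R) r ` rel_interior S"
    by (rule rel_interior_injective_linear_image) (use assms(2) in \<open>auto simp: bounded_linear_scaleR_right inj_on_def\<close>)
  ultimately show ?thesis using assms(3) by (metis image_eqI)
qed

lemma strip_equiv:
  fixes u w :: "'b::real_normed_vector"
  assumes S: "\<forall>c>0. \<forall>y\<in>S. c *\<^sub>R y \<in> S"
  shows "(\<forall>z\<in>strip_pi. Im (exp (-z)) *\<^sub>R u + Im (exp z) *\<^sub>R w \<in> S) \<longleftrightarrow> (\<forall>r>0. w - r *\<^sub>R u \<in> S)"
proof -
  have form: "Im (exp (-z)) *\<^sub>R u + Im (exp z) *\<^sub>R w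
      = (exp (Re z) * sin (Im z)) *\<^sub>R (w - exp (-2 * Re z) *\<^sub>R u)" for z
  proof -
    have e: "exp (Re z) * exp (-2 * Re z) = exp (- Re z)" by (simp add: exp_add[symmetric])
    have "(exp (Re z) * sin (Im z)) *\<^sub>R (w - exp (-2 * Re z) *\<^sub>R u)
       = (exp (Re z) * sin (Im z)) *\<^sub>R w - ((exp (Re z) * exp (-2 * Re z)) * sin (Im z)) *\<^sub>R u"
      by (simp add: scaleR_diff_right mult_ac)
    also have "... = (exp (Re z) * sin (Im z)) *\<^sub>R w - (exp (- Re z) * sin (Im z)) *\<^sub>R u"
      by (simp only: e)
    finally show ?thesis by (simp add: Im_exp)
  qed
  show ?thesis
  proof
    assume H: "\<forall>z\<in>strip_pi. Im (exp (-z)) *\<^sub>R u + Im (exp z) *\<^sub>R w \<in> S"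
    show "\<forall>r>0. w - r *\<^sub>R u \<in> S"
    proof (intro allI impI)
      fix r :: real assume r: "r > 0"
      define z where "z = Complex (- ln r / 2) (pi / 2)"
      have zs: "z \<in> strip_pi" by (simp add: z_def strip_pi_def)
      have "exp (-2 * Re z) = r" using r by (simp add: z_def)
      moreover have "Im (exp (-z)) *\<^sub>R u + Im (exp z) *\<^sub>R w \<in> S" using H zs by blast
      moreover have "sin (Im z) = 1" by (simp add: z_def)
      ultimately have ex: "(exp (Re z)) *\<^sub>R (w - r *\<^sub>R u) \<in> S" using form[of z] by simp
      have "inverse (exp (Re z)) *\<^sub>R ((exp (Re z)) *\<^sub>R (w - r *\<^sub>R u)) \<in> S"
        by (rule S[rule_format, OF _ ex]) simp
      then show "w - r *\<^sub>R u \<in> S" by simp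
    qed
  next
    assume H: "\<forall>r>0. w - r *\<^sub>R u \<in> S"
    show "\<forall>z\<in>strip_pi. Im (exp (-z)) *\<^sub>R u + Im (exp z) *\<^sub>R w \<in> S"
    proof
      fix z assume "z \<in> strip_pi"
      then have "sin (Im z) > 0" by (simp add: strip_pi_def sin_gt_zero)
      then have "exp (Re z) * sin (Im z) > 0" by simp
      then show "Im (exp (-z)) *\<^sub>R u + Im (exp z) *\<^sub>R w \<in> S"
        unfolding form using S H by simp
    qed
  qed
qed

locale lsetup =
  fixes h :: "'a::euclidean_space \<Rightarrow> 'a" and C :: "'a set"
  assumes h_lin: "linear h"
    and h_diag: "\<forall>x. \<exists>u v w. x = u + v + w \<and> u \<in> eigsp h (-1) \<and> v \<in> eigsp h 0 \<and> w \<in> eigsp h 1"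
    and C_closed: "closed C"
    and C_cone: "convex_cone C"
    and C_gen: "{x - y | x y. x \<in> C \<and> y \<in> C} = UNIV"
    and C_inv_exp: "\<forall>t::real. rexp_op t h ` C = C"
    and C_inv_tau: "(\<lambda>x. - fst (cexp_op (\<i> * of_real pi) h (x, 0))) ` C = C"
begin

definition "P1 x = (1/2) *\<^sub>R (h x + h (h x))"
definition "Pm x = (1/2) *\<^sub>R (h (h x) - h x)"
definition "P0 x = x - h (h x)"

lemma uniq:
  assumes "u \<in> eigsp h (-1)" "v \<in> eigsp h 0" "w \<in> eigsp h 1"
  shows "Pm (u + v + w) = u" "P0 (u + v + w) = v" "P1 (u + v + w) = w"
proof -
  have hu: "h u = - u" and hv: "h v = 0" and hw: "h w = w" using assms by (auto simp: eigsp_def)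
  have a: "h (u + v + w) = w - u" using hu hv hw by (simp add: linear_add[OF h_lin])
  have b: "h (w - u) = w + u" using hu hw by (simp add: linear_diff[OF h_lin])
  show "Pm (u + v + w) = u" "P0 (u + v + w) = v" "P1 (u + v + w) = w"
    unfolding Pm_def P0_def P1_def a b by (simp_all add: algebra_simps scaleR_2[symmetric])
qed

lemma comps: "Pm x \<in> eigsp h (-1)" "P0 x \<in> eigsp h 0" "P1 x \<in> eigsp h 1" "x = Pm x + P0 x + P1 x"
proof -
  obtain u v w where x: "x = u + v + w" "u \<in> eigsp h (-1)" "v \<in> eigsp h 0" "w \<in> eigsp h 1"
    using h_diag by blast
  show "Pm x \<in> eigsp h (-1)" "P0 x \<in> eigsp h 0" "P1 x \<in> eigsp h 1" "x = Pm x + P0 x + P1 x"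
    using x uniq[OF x(2-4)] by auto
qed

lemma lin_P: "linear P1" "linear Pm" "linear P0"
  unfolding P1_def[abs_def] Pm_def[abs_def] P0_def[abs_def] linear_iff
  by (auto simp: linear_add[OF h_lin] linear_scale[OF h_lin] algebra_simps)

lemma eig_sub: "subspace (eigsp h j)"
  unfolding subspace_def eigsp_def
  by (auto simp: linear_add[OF h_lin] linear_scale[OF h_lin] linear_0[OF h_lin] algebra_simps)

lemma eig0: "0 \<in> eigsp h j" by (simp add: eigsp_def linear_0[OF h_lin])

lemma cone: "cone C" "convex C" "0 \<in> C"
proof -
  have a0: "0 \<in> C \<and> (\<forall>x \<in> C. \<forall>y \<in> C. x + y \<in> C) \<and> (\<forall>x \<in> C. \<forall>c\<ge>0. c *\<^sub>R x \<in> C)"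
    using C_cone unfolding convex_cone_iff .
  then have a: "0 \<in> C" "\<forall>x\<in>C. \<forall>c\<ge>0. c *\<^sub>R x \<in> C" by simp_all
  show "cone C" using a(2) by (simp add: cone_def)
  show "convex C" using C_cone by (simp add: convex_cone_def)
  show "0 \<in> C" by (rule a(1))
qed

lemma C_add: "a \<in> C \<Longrightarrow> b \<in> C \<Longrightarrow> a + b \<in> C" by (rule convex_cone_add[OF C_cone])
lemma C_scale: "c \<ge> 0 \<Longrightarrow> a \<in> C \<Longrightarrow> c *\<^sub>R a \<in> C" by (rule convex_cone_scaleR[OF C_cone])

lemma rexp_x: "rexp_op t h x = exp (-t) *\<^sub>R Pm x + P0 x + exp t *\<^sub>R P1 x"
proof -
  have "rexp_op t h x = rexp_op t h (Pm x + P0 x + P1 x)"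
    by (rule arg_cong[OF comps(4)[of x], of "\<lambda>y. rexp_op t h y"])
  then show ?thesis by (simp add: rexp_decomp[OF h_lin comps(1)[of x] comps(2)[of x] comps(3)[of x]])
qed

lemma rexp_C: assumes "x \<in> C" shows "exp (-t) *\<^sub>R Pm x + P0 x + exp t *\<^sub>R P1 x \<in> C"
proof -
  have "rexp_op t h x \<in> rexp_op t h ` C" using assms by (rule imageI)
  then have "rexp_op t h x \<in> C" using C_inv_exp by simp
  then show ?thesis unfolding rexp_x .
qed

lemma P1_C: assumes "x \<in> C" shows "P1 x \<in> C"
proof -
  define e where "e n = inverse (real (Suc n))" for n
  have e0: "e n > 0" for n by (simp add: e_def)
  have "e n *\<^sub>R (exp (- ln (real (Suc n))) *\<^sub>R Pm x + P0 x + exp (ln (real (Suc n))) *\<^sub>R P1 x) \<in> C" for n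
    using C_scale[OF less_imp_le[OF e0] rexp_C[OF assms]] by blast
  moreover have "exp (ln (real (Suc n))) = real (Suc n)" "exp (- ln (real (Suc n))) = e n" for n
    by (simp_all add: e_def exp_minus)
  ultimately have inC: "(e n * e n) *\<^sub>R Pm x + e n *\<^sub>R P0 x + P1 x \<in> C" for n
    by (simp add: scaleR_add_right e_def)
  have "e \<longlonglongrightarrow> 0" unfolding e_def by (rule LIMSEQ_inverse_real_of_nat)
  then have "(\<lambda>n. (e n * e n) *\<^sub>R Pm x + e n *\<^sub>R P0 x + P1 x) \<longlonglongrightarrow> (0 * 0) *\<^sub>R Pm x + 0 *\<^sub>R P0 x + P1 x"
    by (intro tendsto_intros)
  then show ?thesis using closed_sequentially[OF C_closed inC] by simp
qed

lemma Pm_C: assumes "x \<in> C" shows "Pm x \<in> C"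
proof -
  define e where "e n = inverse (real (Suc n))" for n
  have e0: "e n > 0" for n by (simp add: e_def)
  have "e n *\<^sub>R (exp (- (- ln (real (Suc n)))) *\<^sub>R Pm x + P0 x + exp (- ln (real (Suc n))) *\<^sub>R P1 x) \<in> C" for n
    using C_scale[OF less_imp_le[OF e0] rexp_C[OF assms]] by blast
  moreover have "exp (- (- ln (real (Suc n)))) = real (Suc n)" "exp (- ln (real (Suc n))) = e n" for n
    by (simp_all add: e_def exp_minus)
  ultimately have inC: "Pm x + e n *\<^sub>R P0 x + (e n * e n) *\<^sub>R P1 x \<in> C" for n
    by (simp add: scaleR_add_right e_def)
  have "e \<longlonglongrightarrow> 0" unfolding e_def by (rule LIMSEQ_inverse_real_of_nat)
  then have "(\<lambda>n. Pm x + e n *\<^sub>R P0 x + (e n * e n) *\<^sub>R P1 x) \<longlonglongrightarrow> Pm x + 0 *\<^sub>R P0 x + (0 * 0) *\<^sub>R P1 x"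
    by (intro tendsto_intros)
  then show ?thesis using closed_sequentially[OF C_closed inC] by simp
qed

definition "sig x = Pm x - P0 x + P1 x"

lemma sig_C: assumes "x \<in> C" shows "sig x \<in> C"
proof -
  have "fst (cexp_op (\<i> * of_real pi) h (x, 0)) = fst (cexp_op (\<i> * of_real pi) h (Pm x + P0 x + P1 x, 0))"
    by (rule arg_cong[OF comps(4)[of x], of "\<lambda>y. fst (cexp_op (\<i> * of_real pi) h (y, 0))"])
  also have "... = - Pm x + P0 x - P1 x"
    by (subst cexp_decomp[OF h_lin comps(1)[of x] comps(2)[of x] comps(3)[of x]]) (simp add: exp_minus)
  finally have "sig x = - fst (cexp_op (\<i> * of_real pi) h (x, 0))" by (simp add: sig_def)
  then have "sig x \<in> (\<lambda>x. - fst (cexp_op (\<i> * of_real pi) h (x, 0))) ` C" by (rule image_eqI) (rule assms)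
  then show ?thesis unfolding C_inv_tau .
qed


lemma eig_neg: "x \<in> eigsp h j \<Longrightarrow> - x \<in> eigsp h j"
  using subspace_neg[OF eig_sub] by blast

lemma eig_scale: "x \<in> eigsp h j \<Longrightarrow> c *\<^sub>R x \<in> eigsp h j"
  using subspace_scale[OF eig_sub] by blast

lemma eig_diff: "x \<in> eigsp h j \<Longrightarrow> y \<in> eigsp h j \<Longrightarrow> x - y \<in> eigsp h j"
  using subspace_diff[OF eig_sub] by blast

lemma sig_inv: "sig (sig x) = x"
proof -
  have e: "sig x = Pm x + (- P0 x) + P1 x" by (simp add: sig_def)
  have "Pm (sig x) = Pm x" "P0 (sig x) = - P0 x" "P1 (sig x) = P1 x"
    using uniq[OF comps(1) eig_neg[OF comps(2)] comps(3), of x x x] unfolding e by simp_all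
  then have "sig (sig x) = Pm x + P0 x + P1 x" by (simp add: sig_def[of "sig x"])
  also have "... = x" by (rule comps(4)[of x, symmetric])
  finally show ?thesis .
qed

lemma lin_sig: "linear sig"
  unfolding sig_def[abs_def] linear_iff
  by (auto simp: linear_add[OF lin_P(1)] linear_add[OF lin_P(2)] linear_add[OF lin_P(3)]
     linear_scale[OF lin_P(1)] linear_scale[OF lin_P(2)] linear_scale[OF lin_P(3)] algebra_simps)

lemma sig_img: "sig ` C = C"
proof
  show "sig ` C \<subseteq> C" using sig_C by blast
  show "C \<subseteq> sig ` C"
  proof
    fix x assume "x \<in> C" then show "x \<in> sig ` C" using sig_C sig_inv by (metis image_eqI)
  qed
qed

lemma inj_sig: "inj sig" by (metis injI sig_inv)

definition "V = {x. P0 x = 0}"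
definition "C1 = C \<inter> eigsp h 1"
definition "C2 = C \<inter> eigsp h (-1)"

lemma V_sub: "subspace V"
  unfolding subspace_def V_def
  by (simp add: linear_add[OF lin_P(3)] linear_scale[OF lin_P(3)] linear_0[OF lin_P(3)])

lemma span_C: "span C = UNIV"
proof -
  have "y \<in> span C" for y
  proof -
    obtain a b where "y = a - b" "a \<in> C" "b \<in> C" using C_gen by blast
    then show ?thesis by (simp add: span_diff span_base)
  qed
  then show ?thesis by blast
qed

lemma int_ne: "interior C \<noteq> {}"
proof -
  have "affine hull C = span C" by (rule affine_hull_span_0[OF hull_inc[OF cone(3)]])
  then have "rel_interior C = interior C" using span_C rel_interior_interior by metis
  moreover have "rel_interior C \<noteq> {}" using rel_interior_eq_empty[OF cone(2)] cone(3) by blast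
  ultimately show ?thesis by simp
qed

lemma intV: "interior C \<inter> V \<noteq> {}"
proof -
  obtain c where c: "c \<in> interior C" using int_ne by blast
  have "interior (sig ` C) = sig ` interior C"
    by (rule interior_injective_linear_image[OF lin_sig inj_sig])
  then have sc: "sig c \<in> interior C" using sig_img c by auto
  define m where "m = (1/2) *\<^sub>R c + (1/2) *\<^sub>R sig c"
  have mi: "m \<in> interior C" unfolding m_def
    by (rule convexD[OF convex_interior[OF cone(2)] c sc]) auto
  have cc: "(1/2) *\<^sub>R c = (1/2) *\<^sub>R (Pm c + P0 c + P1 c)" by (rule arg_cong[OF comps(4)[of c]])
  have hh: "(1/2) *\<^sub>R (a + b + p) + (1/2) *\<^sub>R (a - b + p) = a + 0 + p" for a b p :: 'a
    by ((simp add: algebra_simps scaleR_2[symmetric]) | (simp add: scaleR_add_right scaleR_diff_right flip: scaleR_add_left) | (simp add: algebra_simps flip: scaleR_add_left))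
  have "m = Pm c + 0 + P1 c"
    unfolding m_def sig_def cc hh ..
  then have "P0 m = 0" using uniq(2)[OF comps(1) eig0 comps(3)] by simp
  then show ?thesis using mi by (auto simp: V_def)
qed

lemma convex_C12: "convex C1" "convex C2"
  unfolding C1_def C2_def by (simp_all add: convex_Int cone(2) subspace_imp_convex eig_sub)

lemma CV: "C \<inter> V = C1 + C2"
proof
  show "C \<inter> V \<subseteq> C1 + C2"
  proof
    fix x assume x: "x \<in> C \<inter> V"
    have "x = Pm x + P0 x + P1 x" by (rule comps(4))
    also have "... = P1 x + Pm x" using x by (simp add: V_def add.commute)
    finally have "x = P1 x + Pm x" .
    moreover have "P1 x \<in> C1" "Pm x \<in> C2" using x P1_C Pm_C comps(1) comps(3) by (auto simp: C1_def C2_def)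
    ultimately show "x \<in> C1 + C2" unfolding set_plus_def by blast
  qed
  show "C1 + C2 \<subseteq> C \<inter> V"
  proof
    fix x assume "x \<in> C1 + C2"
    then obtain a b where ab: "x = a + b" "a \<in> C1" "b \<in> C2" unfolding set_plus_def by blast
    then have "x \<in> C" using C_add by (auto simp: C1_def C2_def)
    moreover have "P0 (b + 0 + a) = 0" using ab by (intro uniq(2)) (auto simp: C1_def C2_def eig0)
    then have "P0 x = 0" using ab(1) by (simp add: add.commute)
    ultimately show "x \<in> C \<inter> V" by (simp add: V_def)
  qed
qed

lemma relCV: "interior C \<inter> V = rel_interior C1 + rel_interior C2"
proof -
  have "rel_interior (C \<inter> V) = interior C \<inter> V"
    by (rule rel_interior_convex_Int_affine[OF cone(2) subspace_imp_affine[OF V_sub] intV])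
  then show ?thesis using CV rel_interior_sum[OF convex_C12] by simp
qed


lemma subC: "C1 \<subseteq> eigsp h 1" "C2 \<subseteq> eigsp h (-1)" "C1 \<subseteq> C" "C2 \<subseteq> C"
  by (auto simp: C1_def C2_def)

lemma P1_id: "y \<in> eigsp h 1 \<Longrightarrow> P1 y = y"
  using uniq(3)[OF eig0 eig0, of y] by simp

lemma Pm_id: "y \<in> eigsp h (-1) \<Longrightarrow> Pm y = y"
  using uniq(1)[OF _ eig0 eig0, of y] by simp

lemma aff_C1: "affine hull C1 = eigsp h 1"
proof (rule aff_gen[OF eig_sub subC(1)])
  show "0 \<in> C1" using cone(3) eig0 by (simp add: C1_def)
  show "\<forall>y\<in>eigsp h 1. \<exists>a\<in>C1. \<exists>b\<in>C1. y = a - b"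
  proof
    fix y assume y: "y \<in> eigsp h 1"
    obtain a b where ab: "y = a - b" "a \<in> C" "b \<in> C" using C_gen by blast
    have "y = P1 a - P1 b" using P1_id[OF y] ab(1) linear_diff[OF lin_P(1)] by metis
    moreover have "P1 a \<in> C1" "P1 b \<in> C1" using ab P1_C comps(3) by (auto simp: C1_def)
    ultimately show "\<exists>a\<in>C1. \<exists>b\<in>C1. y = a - b" by blast
  qed
qed

lemma Cm_eq: "uminus ` C \<inter> eigsp h (-1) = uminus ` C2"
proof
  show "uminus ` C \<inter> eigsp h (-1) \<subseteq> uminus ` C2"
  proof
    fix x assume "x \<in> uminus ` C \<inter> eigsp h (-1)"
    then obtain c where "c \<in> C" "x = - c" "- c \<in> eigsp h (-1)" by blast
    then have "c \<in> C2" using eig_neg[of "-c"] by (simp add: C2_def)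
    then show "x \<in> uminus ` C2" using \<open>x = - c\<close> by blast
  qed
  show "uminus ` C2 \<subseteq> uminus ` C \<inter> eigsp h (-1)" using eig_neg by (auto simp: C2_def)
qed

lemma aff_Cm: "affine hull (uminus ` C2) = eigsp h (-1)"
proof (rule aff_gen[OF eig_sub])
  show "uminus ` C2 \<subseteq> eigsp h (-1)" using eig_neg subC(2) by blast
  show "0 \<in> uminus ` C2" using cone(3) eig0 by (force simp add: C2_def)
  show "\<forall>y\<in>eigsp h (-1). \<exists>a\<in>uminus ` C2. \<exists>b\<in>uminus ` C2. y = a - b"
  proof
    fix y assume y: "y \<in> eigsp h (-1)"
    obtain a b where ab: "y = a - b" "a \<in> C" "b \<in> C" using C_gen by blast
    have "y = Pm a - Pm b" using Pm_id[OF y] ab(1) linear_diff[OF lin_P(2)] by metis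
    then have "y = (- Pm b) - (- Pm a)" by simp
    moreover have "Pm a \<in> C2" "Pm b \<in> C2" using ab Pm_C comps(1) by (auto simp: C2_def)
    ultimately show "\<exists>a\<in>uminus ` C2. \<exists>b\<in>uminus ` C2. y = a - b" by blast
  qed
qed

lemma relint_Cm: "rel_interior (uminus ` C2) = uminus ` rel_interior C2"
  by (rule rel_interior_injective_linear_image)
     (auto simp: bounded_linear_minus[OF bounded_linear_ident] inj_on_def)

lemma cone_C12: "cone C1" "cone C2"
  unfolding C1_def C2_def cone_def using C_scale eig_scale by auto

lemma int_rel: "interior C = rel_interior C"
  using rel_interior_nonempty_interior[OF int_ne] by simp

lemma int_scale: "\<forall>c>0. \<forall>y\<in>interior C. c *\<^sub>R y \<in> interior C"
  using relint_scale[OF cone(1)] int_rel by simp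

lemma C_scale': "\<forall>c>0. \<forall>y\<in>C. c *\<^sub>R y \<in> C"
  using C_scale by simp

lemma key_int:
  assumes u: "u \<in> eigsp h (-1)" and w: "w \<in> eigsp h 1"
  shows "(\<forall>r>0. w - r *\<^sub>R u \<in> interior C) \<longleftrightarrow> w \<in> rel_interior C1 \<and> - u \<in> rel_interior C2"
proof -
  have dec: "w - r *\<^sub>R u = (- (r *\<^sub>R u)) + 0 + w" for r by simp
  have inV: "w - r *\<^sub>R u \<in> V" for r
    unfolding V_def mem_Collect_eq dec[of r] by (rule uniq(2)[OF eig_neg[OF eig_scale[OF u]] eig0 w])
  have mem: "w - r *\<^sub>R u \<in> interior C \<longleftrightarrow> w \<in> rel_interior C1 \<and> - (r *\<^sub>R u) \<in> rel_interior C2" for r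
  proof -
    have "w - r *\<^sub>R u \<in> interior C \<longleftrightarrow> w - r *\<^sub>R u \<in> rel_interior C1 + rel_interior C2"
      using relCV inV[of r] by blast
    also have "... \<longleftrightarrow> w \<in> rel_interior C1 \<and> - (r *\<^sub>R u) \<in> rel_interior C2"
    proof
      assume "w - r *\<^sub>R u \<in> rel_interior C1 + rel_interior C2"
      then obtain a b where ab: "w - r *\<^sub>R u = a + b" "a \<in> rel_interior C1" "b \<in> rel_interior C2"
        unfolding set_plus_def by blast
      have a1: "a \<in> eigsp h 1" and b1: "b \<in> eigsp h (-1)" using ab(2,3) rel_interior_subset subC by blast+
      have "b + 0 + a = a + b" by simp
      also have "... = w - r *\<^sub>R u" using ab(1) by simp
      also have "... = (- (r *\<^sub>R u)) + 0 + w" by (rule dec)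
      finally have E: "b + 0 + a = (- (r *\<^sub>R u)) + 0 + w" .
      have "a = P1 (b + 0 + a)" using uniq(3)[OF b1 eig0 a1] by simp
      also have "... = P1 ((- (r *\<^sub>R u)) + 0 + w)" by (simp only: E)
      also have "... = w" by (rule uniq(3)[OF eig_neg[OF eig_scale[OF u]] eig0 w])
      finally have aw: "a = w" .
      have "b = Pm (b + 0 + a)" using uniq(1)[OF b1 eig0 a1] by simp
      also have "... = Pm ((- (r *\<^sub>R u)) + 0 + w)" by (simp only: E)
      also have "... = - (r *\<^sub>R u)" by (rule uniq(1)[OF eig_neg[OF eig_scale[OF u]] eig0 w])
      finally have bw: "b = - (r *\<^sub>R u)" .
      show "w \<in> rel_interior C1 \<and> - (r *\<^sub>R u) \<in> rel_interior C2" using ab(2,3) aw bw by simp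
    next
      assume H2: "w \<in> rel_interior C1 \<and> - (r *\<^sub>R u) \<in> rel_interior C2"
      have "w + (- (r *\<^sub>R u)) \<in> rel_interior C1 + rel_interior C2"
        using H2 by (intro set_plus_intro) auto
      then show "w - r *\<^sub>R u \<in> rel_interior C1 + rel_interior C2" by simp
    qed
    finally show ?thesis .
  qed
  show ?thesis
  proof
    assume A: "\<forall>r>0. w - r *\<^sub>R u \<in> interior C"
    have "w - (1::real) *\<^sub>R u \<in> interior C" using A[rule_format, of 1] by simp
    then show "w \<in> rel_interior C1 \<and> - u \<in> rel_interior C2" using mem[of 1] by simp
  next
    assume H: "w \<in> rel_interior C1 \<and> - u \<in> rel_interior C2"
    show "\<forall>r>0. w - r *\<^sub>R u \<in> interior C"
    proof (intro allI impI)
      fix r :: real assume "r > 0"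
      then have "r *\<^sub>R (- u) \<in> rel_interior C2" using relint_scale[OF cone_C12(2)] H by blast
      then show "w - r *\<^sub>R u \<in> interior C" using mem[of r] H by simp
    qed
  qed
qed

lemma key_C:
  assumes u: "u \<in> eigsp h (-1)" and w: "w \<in> eigsp h 1"
  shows "(\<forall>r>0. w - r *\<^sub>R u \<in> C) \<longleftrightarrow> w \<in> C \<and> - u \<in> C"
proof
  assume "\<forall>r>0. w - r *\<^sub>R u \<in> C"
  then have H: "w - u \<in> C" by (metis scaleR_one zero_less_one)
  have e: "(- u) + 0 + w = w - u" by simp
  have "P1 (w - u) = w" "Pm (w - u) = - u" using uniq[OF eig_neg[OF u] eig0 w] unfolding e by simp_all
  then show "w \<in> C \<and> - u \<in> C" using P1_C[OF H] Pm_C[OF H] by simp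
next
  assume H: "w \<in> C \<and> - u \<in> C"
  show "\<forall>r>0. w - r *\<^sub>R u \<in> C"
  proof (intro allI impI)
    fix r :: real assume "r > 0"
    then have "r *\<^sub>R (- u) \<in> C" using H by (intro C_scale) auto
    then have "w + r *\<^sub>R (- u) \<in> C" using H by (intro C_add) auto
    then show "w - r *\<^sub>R u \<in> C" by simp
  qed
qed

lemma snd_x: "snd (cexp_op z h (x, 0)) = Im (exp (-z)) *\<^sub>R Pm x + Im (exp z) *\<^sub>R P1 x"
proof -
  have "snd (cexp_op z h (x, 0)) = snd (cexp_op z h (Pm x + P0 x + P1 x, 0))"
    by (rule arg_cong[OF comps(4)[of x], of "\<lambda>y. snd (cexp_op z h (y, 0))"])
  then show ?thesis by (simp add: cexp_decomp[OF h_lin comps(1)[of x] comps(2)[of x] comps(3)[of x]])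
qed


definition "Wset = {a + b + c | a b c. a \<in> top_of_set (eigsp h 1) interior_of (C \<inter> eigsp h 1) \<and> b \<in> eigsp h 0 \<and> c \<in> top_of_set (eigsp h (-1)) interior_of (uminus ` C \<inter> eigsp h (-1))}"

lemma Cp0_eq: "top_of_set (eigsp h 1) interior_of (C \<inter> eigsp h 1) = rel_interior C1"
  using io_rel[OF aff_C1] by (simp add: C1_def)

lemma Cm0_eq: "top_of_set (eigsp h (-1)) interior_of (uminus ` C \<inter> eigsp h (-1)) = uminus ` rel_interior C2"
  using io_rel[OF aff_Cm] Cm_eq relint_Cm by simp

lemma W_char: "x \<in> Wset \<longleftrightarrow> P1 x \<in> rel_interior C1 \<and> - Pm x \<in> rel_interior C2"
proof
  assume "x \<in> Wset"
  then obtain a b c where abc: "x = a + b + c" "a \<in> rel_interior C1" "b \<in> eigsp h 0" "c \<in> uminus ` rel_interior C2"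
    unfolding Wset_def Cp0_eq Cm0_eq by blast
  then obtain d where d: "c = - d" "d \<in> rel_interior C2" by blast
  have a1: "a \<in> eigsp h 1" and d1: "d \<in> eigsp h (-1)" using abc(2) d(2) rel_interior_subset subC by blast+
  have c1: "c \<in> eigsp h (-1)" using eig_neg[OF d1] d(1) by simp
  have "x = c + b + a" using abc(1) by (simp add: algebra_simps)
  then have "P1 x = a" "Pm x = c" using uniq[OF c1 abc(3) a1] by simp_all
  then show "P1 x \<in> rel_interior C1 \<and> - Pm x \<in> rel_interior C2" using abc(2) d by simp
next
  assume H: "P1 x \<in> rel_interior C1 \<and> - Pm x \<in> rel_interior C2"
  have "x = Pm x + P0 x + P1 x" by (rule comps(4))
  also have "... = P1 x + P0 x + Pm x" by (simp add: algebra_simps)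
  finally have "x = P1 x + P0 x + Pm x" .
  moreover have "Pm x \<in> uminus ` rel_interior C2" using H by (metis image_eqI minus_minus)
  ultimately show "x \<in> Wset" unfolding Wset_def Cp0_eq Cm0_eq using H comps(2) by blast
qed

lemma main1: "Wset = {x. \<forall>z\<in>strip_pi. snd (cexp_op z h (x, 0)) \<in> interior C}"
proof -
  have "x \<in> Wset \<longleftrightarrow> (\<forall>z\<in>strip_pi. snd (cexp_op z h (x, 0)) \<in> interior C)" for x
    using strip_equiv[OF int_scale, of "Pm x" "P1 x"] key_int[OF comps(1)[of x] comps(3)[of x]] W_char[of x]
    by (simp add: snd_x)
  then show ?thesis by blast
qed

definition "R2 = {x. P1 x \<in> C \<and> - Pm x \<in> C}"

lemma main2a: "{x. \<forall>z\<in>strip_pi. snd (cexp_op z h (x, 0)) \<in> C} = R2"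
proof -
  have "x \<in> R2 \<longleftrightarrow> (\<forall>z\<in>strip_pi. snd (cexp_op z h (x, 0)) \<in> C)" for x
    using strip_equiv[OF C_scale', of "Pm x" "P1 x"] key_C[OF comps(1)[of x] comps(3)[of x]]
    by (simp add: snd_x R2_def)
  then show ?thesis by blast
qed

lemma main2b: "closure Wset = R2"
proof
  have bl: "bounded_linear P1" "bounded_linear (\<lambda>x. - Pm x)"
    using lin_P linear_conv_bounded_linear bounded_linear_minus by blast+
  have "R2 = P1 -` C \<inter> (\<lambda>x. - Pm x) -` C" by (auto simp: R2_def)
  then have cl: "closed R2"
    using continuous_closed_vimage[OF C_closed linear_continuous_at[OF bl(1)]]
      continuous_closed_vimage[OF C_closed linear_continuous_at[OF bl(2)]] by auto
  have "Wset \<subseteq> R2" using W_char rel_interior_subset subC by (force simp: R2_def)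
  then show "closure Wset \<subseteq> R2" using closure_minimal cl by blast
  show "R2 \<subseteq> closure Wset"
  proof
    fix x assume x: "x \<in> R2"
    have "C1 \<noteq> {}" "C2 \<noteq> {}" using cone(3) eig0 by (auto simp: C1_def C2_def)
    then obtain a0 b0 where a0: "a0 \<in> rel_interior C1" and b0: "b0 \<in> rel_interior C2"
      using rel_interior_eq_empty convex_C12 by blast
    have a01: "a0 \<in> eigsp h 1" and b01: "b0 \<in> eigsp h (-1)" using a0 b0 rel_interior_subset subC by blast+
    define d where "d = a0 - b0"
    have e: "(- b0) + 0 + a0 = d" by (simp add: d_def)
    have Pd: "P1 d = a0" "Pm d = - b0" using uniq[OF eig_neg[OF b01] eig0 a01] unfolding e by simp_all
    define e where "e n = inverse (real (Suc n))" for n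
    have e0: "0 < e n" "e n \<le> 1" for n by (auto simp: e_def field_simps)
    define y where "y n = x - e n *\<^sub>R (x - d)" for n
    have x1: "P1 x \<in> C1" "- Pm x \<in> C2" using x comps(3) eig_neg[OF comps(1)] by (auto simp: R2_def C1_def C2_def)
    have "y n \<in> Wset" for n
    proof -
      have "P1 (y n) = P1 x - e n *\<^sub>R (P1 x - a0)"
        unfolding y_def using Pd by (simp add: linear_diff[OF lin_P(1)] linear_scale[OF lin_P(1)])
      moreover have "- Pm (y n) = (- Pm x) - e n *\<^sub>R ((- Pm x) - b0)"
      proof -
        have "Pm (y n) = Pm x - e n *\<^sub>R (Pm x - Pm d)"
          unfolding y_def by (simp add: linear_diff[OF lin_P(2)] linear_scale[OF lin_P(2)])
        then show ?thesis using Pd by (simp add: algebra_simps)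
      qed
      moreover have "P1 x - e n *\<^sub>R (P1 x - a0) \<in> rel_interior C1"
        by (rule rel_interior_closure_convex_shrink[OF convex_C12(1) a0 closure_subset[THEN subsetD, OF x1(1)] e0])
      moreover have "(- Pm x) - e n *\<^sub>R ((- Pm x) - b0) \<in> rel_interior C2"
        by (rule rel_interior_closure_convex_shrink[OF convex_C12(2) b0 closure_subset[THEN subsetD, OF x1(2)] e0])
      ultimately show ?thesis using W_char by simp
    qed
    moreover have "e \<longlonglongrightarrow> 0" unfolding e_def by (rule LIMSEQ_inverse_real_of_nat)
    then have "y \<longlonglongrightarrow> x - 0 *\<^sub>R (x - d)" unfolding y_def by (intro tendsto_intros)
    then have "y \<longlonglongrightarrow> x" by simp
    ultimately show "x \<in> closure Wset" using closure_sequential by blast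
  qed
qed

end

theorem lemma3p3:
  fixes h :: "'a::euclidean_space \<Rightarrow> 'a" and C :: "'a set"
  assumes h_lin: "linear h"
    and h_diag: "\<forall>x. \<exists>u v w. x = u + v + w \<and> u \<in> eigsp h (-1) \<and> v \<in> eigsp h 0 \<and> w \<in> eigsp h 1"
    and C_closed: "closed C"
    and C_cone: "convex_cone C"
    and C_pointed: "C \<inter> uminus ` C = {0}"
    and C_gen: "{x - y | x y. x \<in> C \<and> y \<in> C} = UNIV"
    and C_inv_exp: "\<forall>t::real. rexp_op t h ` C = C"
    and C_inv_tau: "(\<lambda>x. - fst (cexp_op (\<i> * of_real pi) h (x, 0))) ` C = C"
  defines "Cp \<equiv> C \<inter> eigsp h 1"
    and "Cm \<equiv> uminus ` C \<inter> eigsp h (-1)"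
  defines "Cp0 \<equiv> top_of_set (eigsp h 1) interior_of Cp"
    and "Cm0 \<equiv> top_of_set (eigsp h (-1)) interior_of Cm"
  defines "W \<equiv> {a + b + c | a b c. a \<in> Cp0 \<and> b \<in> eigsp h 0 \<and> c \<in> Cm0}"
  shows "W = {x. \<forall>z\<in>strip_pi. snd (cexp_op z h (x, 0)) \<in> interior C}
       \<and> closure W = {x. \<forall>z\<in>strip_pi. snd (cexp_op z h (x, 0)) \<in> C}"
proof -
  have L: "lsetup h C" unfolding lsetup_def
    using h_lin h_diag C_closed C_cone C_gen C_inv_exp C_inv_tau by blast
  interpret lsetup h C by (rule L)
  have W: "W = Wset" unfolding W_def Cp0_def Cm0_def Cp_def Cm_def Wset_def ..
  show ?thesis using main1 main2a main2b W by simp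
qed

end
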